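(* Let $D$ be an $m\times n$ array and $h$ a positive integer. Let $D\otimes J_{h,1}$ be the $mh\times n$ array in which cell $((r-1)h+s,\,c)$, for $r\in[1,m]$, $s\in[1,h]$, $c\in[1,n]$, is filled if and only if $(r,c)$ is filled in $D$. Then the $h$-knight is a solution to $T(D)$ if and only if the bishop is a solution to $T(D\otimes J_{h,1})$.
   Context: Arrays are partially filled and toroidal; $F(B)$ denotes the filled cells; every row and column contains a filled cell. $s_R(i,j)=(i,j+t)$, $s_C(i,j)=(i+t,j)$ with $t\ge1$ minimal such that the cell is filled. The $a$-knight is $N_a=s_C\circ s_R^{a}$; the bishop is $N_1=s_C\circ s_R$. A move function is a solution to $T(B)$ if it is a permutation of $F(B)$ forming a single cycle of length $|F(B)|$. *)

theory Defs
  imports Main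
begin

text \<open>Arrays are m x n, toroidal, with cells indexed from 0: (i,j) with i < m, j < n.
  A partially filled array is given by its set of filled cells F.\<close>

definition is_array :: "nat \<Rightarrow> nat \<Rightarrow> (nat \<times> nat) set \<Rightarrow> bool" where
  "is_array m n F \<longleftrightarrow> 0 < m \<and> 0 < n \<and> F \<subseteq> {..<m} \<times> {..<n}
     \<and> (\<forall>i<m. \<exists>j. (i, j) \<in> F) \<and> (\<forall>j<n. \<exists>i. (i, j) \<in> F)"

definition sR :: "nat \<Rightarrow> (nat \<times> nat) set \<Rightarrow> nat \<times> nat \<Rightarrow> nat \<times> nat" where
  "sR n F = (\<lambda>(i, j). (i, (j + (LEAST t. 1 \<le> t \<and> (i, (j + t) mod n) \<in> F)) mod n))"

definition sC :: "nat \<Rightarrow> (nat \<times> nat) set \<Rightarrow> nat \<times> nat \<Rightarrow> nat \<times> nat" where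
  "sC m F = (\<lambda>(i, j). ((i + (LEAST t. 1 \<le> t \<and> ((i + t) mod m, j) \<in> F)) mod m, j))"

definition knight :: "nat \<Rightarrow> nat \<Rightarrow> (nat \<times> nat) set \<Rightarrow> nat \<Rightarrow> nat \<times> nat \<Rightarrow> nat \<times> nat" where
  "knight m n F a = sC m F \<circ> (sR n F ^^ a)"

definition bishop :: "nat \<Rightarrow> nat \<Rightarrow> (nat \<times> nat) set \<Rightarrow> nat \<times> nat \<Rightarrow> nat \<times> nat" where
  "bishop m n F = sC m F \<circ> sR n F"

text \<open>A move function f is a solution to T(B): it is a permutation of F(B) forming a single
  cycle of length |F(B)|, i.e. a bijection of F onto itself whose orbit of every filled cell is all of F.\<close>
definition is_solution :: "(nat \<times> nat) set \<Rightarrow> (nat \<times> nat \<Rightarrow> nat \<times> nat) \<Rightarrow> bool" where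
  "is_solution F f \<longleftrightarrow> bij_betw f F F \<and> (\<forall>x\<in>F. {(f ^^ k) x | k. True} = F)"

text \<open>D \<otimes> J_{h,1}: row i (0-indexed) of the mh x n array copies row (i div h) of D.\<close>
definition kron_col :: "nat \<Rightarrow> (nat \<times> nat) set \<Rightarrow> (nat \<times> nat) set" where
  "kron_col h F = {(i, c). (i div h, c) \<in> F}"

end

theory Submission
  imports Defs
begin

lemma sR_fst: "fst (sR n F x) = fst x"
  by (cases x) (simp add: sR_def)

lemma sC_snd: "snd (sC m F x) = snd x"
  by (cases x) (simp add: sC_def)

lemma sR_in:
  assumes sub: "F \<subseteq> UNIV \<times> {..<n}" and x: "x \<in> F"
  shows "sR n F x \<in> F"
proof -
  obtain i j where xij: "x = (i, j)" by (cases x)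
  have jn: "j < n" using sub x xij by auto
  have "1 \<le> n \<and> (i, (j + n) mod n) \<in> F" using x xij jn by simp
  then have "1 \<le> (LEAST t. 1 \<le> t \<and> (i, (j + t) mod n) \<in> F) \<and>
      (i, (j + (LEAST t. 1 \<le> t \<and> (i, (j + t) mod n) \<in> F)) mod n) \<in> F"
    by (rule LeastI)
  then show ?thesis by (simp add: sR_def xij)
qed

lemma sC_in:
  assumes sub: "F \<subseteq> {..<m} \<times> UNIV" and x: "x \<in> F"
  shows "sC m F x \<in> F"
proof -
  obtain i j where xij: "x = (i, j)" by (cases x)
  have jn: "i < m" using sub x xij by auto
  have "1 \<le> m \<and> ((i + m) mod m, j) \<in> F" using x xij jn by simp
  then have "1 \<le> (LEAST t. 1 \<le> t \<and> ((i + t) mod m, j) \<in> F) \<and>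
      ((i + (LEAST t. 1 \<le> t \<and> ((i + t) mod m, j) \<in> F)) mod m, j) \<in> F"
    by (rule LeastI)
  then show ?thesis by (simp add: sC_def xij)
qed

lemma sR_inj:
  assumes sub: "F \<subseteq> UNIV \<times> {..<n}"
  shows "inj_on (sR n F) F"
proof -
  have main: "False" if a: "(i, j1) \<in> F" "(i, j2) \<in> F" "j1 < j2"
    and eq: "(j1 + (LEAST t. 1 \<le> t \<and> (i, (j1 + t) mod n) \<in> F)) mod n =
             (j2 + (LEAST t. 1 \<le> t \<and> (i, (j2 + t) mod n) \<in> F)) mod n" for i j1 j2
  proof -
    define t1 where "t1 = (LEAST t. 1 \<le> t \<and> (i, (j1 + t) mod n) \<in> F)"
    define t2 where "t2 = (LEAST t. 1 \<le> t \<and> (i, (j2 + t) mod n) \<in> F)"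
    have j2n: "j2 < n" using a sub by auto
    have "1 \<le> j2 - j1 \<and> (i, (j1 + (j2 - j1)) mod n) \<in> F" using a j2n by simp
    then have t1le: "t1 \<le> j2 - j1" unfolding t1_def by (rule Least_le)
    have "1 \<le> n - (j2 - j1) \<and> (i, (j2 + (n - (j2 - j1))) mod n) \<in> F" using a j2n
      by (simp add: add.commute)
    then have t2le: "t2 \<le> n - (j2 - j1)" unfolding t2_def by (rule Least_le)
    have "1 \<le> n \<and> (i, (j1 + n) mod n) \<in> F" using a j2n by simp
    then have t1ge: "1 \<le> t1 \<and> (i, (j1 + t1) mod n) \<in> F" unfolding t1_def by (rule LeastI)
    have "1 \<le> n \<and> (i, (j2 + n) mod n) \<in> F" using a j2n by simp
    then have t2ge: "1 \<le> t2 \<and> (i, (j2 + t2) mod n) \<in> F" unfolding t2_def by (rule LeastI)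
    have e1: "(j1 + t1) mod n = j1 + t1" using t1le j2n a(3) by simp
    have eq': "(j1 + t1) mod n = (j2 + t2) mod n" using eq unfolding t1_def t2_def .
    show False
    proof (cases "j2 + t2 < n")
      case True
      then show ?thesis using eq' e1 t1le t2ge a(3) by auto
    next
      case False
      then have "(j2 + t2) mod n = j2 + t2 - n" using t2le j2n
        by (simp add: le_mod_geq)
      then show ?thesis using eq' e1 t1le t2ge t2le j2n a(3) t1ge by auto
    qed
  qed
  show ?thesis
  proof (rule inj_onI)
    fix x y assume x: "x \<in> F" and y: "y \<in> F" and e: "sR n F x = sR n F y"
    obtain i j1 where xij: "x = (i, j1)" by (cases x)
    obtain i' j2 where yij: "y = (i', j2)" by (cases y)
    have ii: "i' = i" using e xij yij by (simp add: sR_def)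
    have e2: "(j1 + (LEAST t. 1 \<le> t \<and> (i, (j1 + t) mod n) \<in> F)) mod n =
             (j2 + (LEAST t. 1 \<le> t \<and> (i, (j2 + t) mod n) \<in> F)) mod n"
      using e xij yij ii by (simp add: sR_def)
    show "x = y"
    proof (cases j1 j2 rule: linorder_cases)
      case less then show ?thesis using main[OF _ _ less e2] x y xij yij ii by auto
    next
      case equal then show ?thesis using xij yij ii by simp
    next
      case greater then show ?thesis using main[OF _ _ greater e2[symmetric]] x y xij yij ii by auto
    qed
  qed
qed

lemma sol_iff:
  assumes fin: "finite F"
  shows "is_solution F f \<longleftrightarrow> (\<forall>x\<in>F. {(f ^^ k) x | k. True} = F)"
proof
  assume "is_solution F f" then show "\<forall>x\<in>F. {(f ^^ k) x | k. True} = F"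
    by (simp add: is_solution_def)
next
  assume orb: "\<forall>x\<in>F. {(f ^^ k) x | k. True} = F"
  have maps: "f x \<in> F" if "x \<in> F" for x
  proof -
    have "(f ^^ 1) x \<in> {(f ^^ k) x | k. True}" by blast
    moreover have "{(f ^^ k) x | k. True} = F" using orb that by (rule bspec)
    ultimately show ?thesis by (metis One_nat_def funpow_0 funpow_Suc_right o_apply)
  qed
  have surj: "F \<subseteq> f ` F"
  proof
    fix y assume y: "y \<in> F"
    have "y \<in> {(f ^^ k) (f y) | k. True}" using orb maps[OF y] y by simp
    then obtain k where k: "y = (f ^^ k) (f y)" by blast
    have "(f ^^ k) y \<in> F" using orb y by blast
    moreover have "y = f ((f ^^ k) y)" using k by (simp add: funpow_swap1)
    ultimately show "y \<in> f ` F" by blast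
  qed
  have "f ` F = F" using surj maps by blast
  moreover have "inj_on f F" using finite_surj_inj[OF fin surj] .
  ultimately show "is_solution F f" using orb by (simp add: is_solution_def bij_betw_def)
qed

lemma arith_D:
  fixes a v h :: nat
  shows "v < h \<Longrightarrow> (a * h + v) div h = a"
  by simp

lemma arith_A:
  fixes a v h m :: nat
  assumes "v < h"
  shows "(a * h + v) mod (m * h) = (a mod m) * h + v"
proof -
  have "(a * h + v) mod (h * m) = h * ((a * h + v) div h mod m) + (a * h + v) mod h"
    by (rule mod_mult2_eq)
  moreover have "(a * h + v) div h = a" using assms by simp
  moreover have "(a * h + v) mod h = v" using assms by simp
  ultimately show ?thesis by (simp add: mult.commute)
qed

context
  fixes m n h :: nat and D :: "(nat \<times> nat) set"
  assumes Dsub: "D \<subseteq> {..<m} \<times> {..<n}" and mpos: "0 < m" and npos: "0 < n" and hpos: "0 < h"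
begin

abbreviation "E \<equiv> kron_col h D"
abbreviation "\<rho> \<equiv> sR n D"
abbreviation "\<sigma> \<equiv> sC m D"
abbreviation "K \<equiv> knight m n D h"
abbreviation "B \<equiv> bishop (m * h) n E"
definition phi :: "nat \<times> nat \<Rightarrow> nat \<times> nat" where "phi x = (fst x * h, snd x)"

lemma E_mem: "(i, j) \<in> E \<longleftrightarrow> (i div h, j) \<in> D"
  by (simp add: kron_col_def)

lemma E_sub: "E \<subseteq> {..<m * h} \<times> {..<n}"
proof
  fix x assume "x \<in> E"
  then obtain i j where x: "x = (i, j)" and d: "(i div h, j) \<in> D" by (cases x) (auto simp: E_mem)
  then have "i div h < m" "j < n" using Dsub by auto
  then show "x \<in> {..<m * h} \<times> {..<n}" using x hpos by (simp add: div_less_iff_less_mult)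
qed

lemma rho_in: "x \<in> D \<Longrightarrow> \<rho> x \<in> D"
  by (rule sR_in) (use Dsub in auto)

lemma sigma_in: "x \<in> D \<Longrightarrow> \<sigma> x \<in> D"
  by (rule sC_in) (use Dsub in auto)

lemma rho_pow: "x \<in> D \<Longrightarrow> (\<rho> ^^ s) x \<in> D \<and> fst ((\<rho> ^^ s) x) = fst x"
  by (induction s) (auto simp: rho_in sR_fst)

lemma K_in: "x \<in> D \<Longrightarrow> K x \<in> D"
  by (simp add: knight_def sigma_in rho_pow)

lemma K_pow_in: "x \<in> D \<Longrightarrow> (K ^^ q) x \<in> D"
  by (induction q) (auto simp: K_in)

lemma B_in: "x \<in> E \<Longrightarrow> B x \<in> E"
  unfolding bishop_def o_apply
  by (rule sC_in, use E_sub in auto, rule sR_in, use E_sub in auto)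

lemma B_pow_in: "x \<in> E \<Longrightarrow> (B ^^ q) x \<in> E"
  by (induction q) (auto simp: B_in)

lemma rho_surj: "\<rho> ` D = D"
proof (rule endo_inj_surj)
  show "finite D" using Dsub by (rule finite_subset) auto
  show "\<rho> ` D \<subseteq> D" using rho_in by auto
  show "inj_on \<rho> D" by (rule sR_inj) (use Dsub in auto)
qed

lemma rho_pow_surj: "(\<rho> ^^ s) ` D = D"
proof (induction s)
  case 0 then show ?case by simp
next
  case (Suc s)
  have "(\<rho> ^^ Suc s) ` D = \<rho> ` ((\<rho> ^^ s) ` D)" by (simp add: image_comp)
  then show ?case using Suc rho_surj by simp
qed

lemma sR_E: "sR n E (i, j) = (i, snd (\<rho> (i div h, j)))"
  by (simp add: sR_def kron_col_def)

lemma sCE_step1: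
  assumes d: "(r, j) \<in> D" and s: "s + 1 < h"
  shows "sC (m * h) E (r * h + s, j) = (r * h + s + 1, j)"
proof -
  have rm: "r < m" using d Dsub by auto
  have md: "(r * h + (s + 1)) mod (m * h) = r * h + (s + 1)"
    using arith_A[of "s+1" h r m] s rm by simp
  have dv: "(r * h + (s + 1)) div h = r" by (rule arith_D) (use s in simp)
  have L: "(LEAST t. 1 \<le> t \<and> ((r * h + s + t) mod (m * h), j) \<in> E) = 1"
  proof (rule Least_equality)
    show "1 \<le> (1::nat) \<and> ((r * h + s + 1) mod (m * h), j) \<in> E"
      using md dv d by (simp add: E_mem add.assoc)
  qed simp
  show ?thesis unfolding sC_def using L md by (simp add: add.assoc)
qed

lemma sCE_step2:
  assumes d: "(r, j) \<in> D"
  shows "sC (m * h) E (r * h + (h - 1), j) = (fst (\<sigma> (r, j)) * h, j)"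
proof -
  have rm: "r < m" using d Dsub by auto
  obtain h' where hh: "h = Suc h'" using hpos by (cases h) auto
  define T where "T = (LEAST T. 1 \<le> T \<and> ((r + T) mod m, j) \<in> D)"
  have "1 \<le> m \<and> ((r + m) mod m, j) \<in> D" using d rm mpos by simp
  then have TP: "1 \<le> T \<and> ((r + T) mod m, j) \<in> D" unfolding T_def by (rule LeastI)
  then obtain T' where TT: "T = Suc T'" by (cases T) auto
  have sig: "\<sigma> (r, j) = ((r + T) mod m, j)" by (simp add: sC_def T_def)
  define t0 where "t0 = h * T' + 1"
  have e0: "r * h + (h - 1) + t0 = (r + T) * h + 0" unfolding t0_def TT hh by (simp add: algebra_simps)
  have m0: "(r * h + (h - 1) + t0) mod (m * h) = ((r + T) mod m) * h"
    using e0 arith_A[of 0 h "r + T" m] hpos by simp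
  have L: "(LEAST t. 1 \<le> t \<and> ((r * h + (h - 1) + t) mod (m * h), j) \<in> E) = t0"
  proof (rule Least_equality)
    show "1 \<le> t0 \<and> ((r * h + (h - 1) + t0) mod (m * h), j) \<in> E"
      using m0 TP hpos by (simp add: E_mem t0_def)
  next
    fix t assume tP: "1 \<le> t \<and> ((r * h + (h - 1) + t) mod (m * h), j) \<in> E"
    then obtain t' where tt: "t = Suc t'" by (cases t) auto
    define u where "u = t' div h"
    define v where "v = t' mod h"
    have vh: "v < h" unfolding v_def using hpos by simp
    have tuv: "t' = u * h + v" unfolding u_def v_def by simp
    have et: "r * h + (h - 1) + t = (r + 1 + u) * h + v" unfolding tt tuv hh by (simp add: algebra_simps)
    have "((r * h + (h - 1) + t) mod (m * h)) div h = (r + 1 + u) mod m"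
      unfolding et arith_A[OF vh] using vh by simp
    then have "((r + (u + 1)) mod m, j) \<in> D" using tP by (simp add: E_mem add.assoc add.commute)
    then have "T \<le> u + 1" unfolding T_def by (intro Least_le) simp
    then have "T' \<le> u" using TT by simp
    then have "h * T' \<le> u * h" by (simp add: mult.commute)
    then show "t0 \<le> t" unfolding t0_def tt tuv by linarith
  qed
  have "sC (m * h) E (r * h + (h - 1), j) = ((r * h + (h - 1) + t0) mod (m * h), j)"
    unfolding sC_def using L by simp
  then show ?thesis using m0 sig by simp
qed

lemma rho_pair: "(r, j) \<in> D \<Longrightarrow> (r, snd ((\<rho> ^^ t) (r, j))) = (\<rho> ^^ t) (r, j)"
  using rho_pow[of "(r, j)" t] by (metis prod.collapse fst_conv)

lemma rho_pair1: "(r, j) \<in> D \<Longrightarrow> (r, snd (\<rho> (r, j))) = \<rho> (r, j)"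
  using rho_pair[of r j 1] by simp

lemma B_step1:
  assumes d: "(r, j) \<in> D" and s: "s + 1 < h"
  shows "B (r * h + s, j) = (r * h + s + 1, snd (\<rho> (r, j)))"
proof -
  have dv: "(r * h + s) div h = r" by (rule arith_D) (use s in simp)
  have "(r, snd (\<rho> (r, j))) \<in> D" using rho_pair1[OF d] rho_in[OF d] by simp
  then show ?thesis unfolding bishop_def o_apply sR_E dv using sCE_step1 s by simp
qed

lemma B_step2:
  assumes d: "(r, j) \<in> D"
  shows "B (r * h + (h - 1), j) = (fst (\<sigma> (\<rho> (r, j))) * h, snd (\<rho> (r, j)))"
proof -
  have dv: "(r * h + (h - 1)) div h = r" by (rule arith_D) (use hpos in simp)
  have "(r, snd (\<rho> (r, j))) \<in> D" using rho_pair1[OF d] rho_in[OF d] by simp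
  then show ?thesis unfolding bishop_def o_apply sR_E dv using sCE_step2 rho_pair1[OF d] by simp
qed

lemma B_iter:
  assumes d: "(r, j) \<in> D"
  shows "s + t < h \<Longrightarrow> (B ^^ t) (r * h + s, j) = (r * h + s + t, snd ((\<rho> ^^ t) (r, j)))"
proof (induction t)
  case 0 then show ?case by simp
next
  case (Suc t)
  have w: "(r, snd ((\<rho> ^^ t) (r, j))) \<in> D" using rho_pair[OF d, of t] rho_pow[OF d, of t] by simp
  have "(B ^^ Suc t) (r * h + s, j) = B (r * h + (s + t), snd ((\<rho> ^^ t) (r, j)))"
    using Suc by (simp add: add.assoc)
  also have "\<dots> = (r * h + (s + t) + 1, snd (\<rho> (r, snd ((\<rho> ^^ t) (r, j)))))"
    by (rule B_step1[OF w]) (use Suc in simp)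
  also have "\<dots> = (r * h + s + Suc t, snd ((\<rho> ^^ Suc t) (r, j)))"
    using rho_pair[OF d, of t] by simp
  finally show ?case .
qed

lemma E_decomp:
  assumes "y \<in> E"
  obtains r s j where "y = (r * h + s, j)" "(r, j) \<in> D" "s < h"
proof -
  obtain i j where y: "y = (i, j)" by (cases y)
  have "(i div h, j) \<in> D" using assms y by (simp add: E_mem)
  moreover have "i = i div h * h + i mod h" by simp
  moreover have "i mod h < h" using hpos by simp
  ultimately show ?thesis using that y by metis
qed

lemma to_phi: "y \<in> E \<Longrightarrow> \<exists>z\<in>D. \<exists>c. (B ^^ c) y = phi z"
proof -
  assume "y \<in> E"
  then obtain r s j where y: "y = (r * h + s, j)" and d: "(r, j) \<in> D" and sh: "s < h"
    by (rule E_decomp)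
  define w where "w = (\<rho> ^^ (h - 1 - s)) (r, j)"
  have wD: "w \<in> D" and wr: "(r, snd w) = w" unfolding w_def using rho_pair[OF d] rho_pow[OF d] by auto
  have "(B ^^ (h - 1 - s)) y = (r * h + s + (h - 1 - s), snd w)"
    unfolding y w_def by (rule B_iter[OF d]) (use sh in simp)
  also have "\<dots> = (r * h + (h - 1), snd w)" using sh by simp
  finally have "(B ^^ Suc (h - 1 - s)) y = B (r * h + (h - 1), snd w)" by simp
  also have "\<dots> = (fst (\<sigma> (\<rho> w)) * h, snd (\<rho> w))" using B_step2[of r "snd w"] wD wr by simp
  also have "\<dots> = phi (\<sigma> (\<rho> w))" by (simp add: phi_def sC_snd)
  finally show ?thesis using sigma_in[OF rho_in[OF wD]] by blast
qed

lemma from_phi: "y \<in> E \<Longrightarrow> \<exists>w\<in>D. \<exists>a. (B ^^ a) (phi w) = y"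
proof -
  assume "y \<in> E"
  then obtain r s j where y: "y = (r * h + s, j)" and d: "(r, j) \<in> D" and sh: "s < h"
    by (rule E_decomp)
  obtain w where wD: "w \<in> D" and ww: "(\<rho> ^^ s) w = (r, j)"
    using d rho_pow_surj[of s] by (metis imageE)
  have wr: "fst w = r" using rho_pow[OF wD, of s] ww by simp
  have wr2: "(r, snd w) = w" using wr by auto
  have "(B ^^ s) (r * h + 0, snd w) = (r * h + 0 + s, snd ((\<rho> ^^ s) (r, snd w)))"
    by (rule B_iter) (use wD wr2 sh in simp_all)
  then have "(B ^^ s) (phi w) = y" using wr2 ww wr y by (simp add: phi_def)
  then show ?thesis using wD by blast
qed

lemma B_h: "x \<in> D \<Longrightarrow> (B ^^ h) (phi x) = phi (K x)"
proof -
  assume xD: "x \<in> D"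
  obtain r j where x: "x = (r, j)" by (cases x)
  have d: "(r, j) \<in> D" using xD x by simp
  obtain h' where hh: "h = Suc h'" using hpos by (cases h) auto
  define w where "w = (\<rho> ^^ h') (r, j)"
  have wD: "w \<in> D" and wr: "(r, snd w) = w" unfolding w_def using rho_pair[OF d] rho_pow[OF d] by auto
  have "(B ^^ h') (r * h + 0, j) = (r * h + 0 + h', snd w)"
    unfolding w_def by (rule B_iter[OF d]) (use hh in simp)
  moreover have "phi x = (r * h + 0, j)" by (simp add: phi_def x)
  moreover have "B ^^ h = B \<circ> B ^^ h'" by (metis hh funpow.simps(2))
  moreover have "r * h + 0 + h' = r * h + (h - 1)" using hh by simp
  ultimately have "(B ^^ h) (phi x) = B (r * h + (h - 1), snd w)" by simp
  also have "\<dots> = (fst (\<sigma> (\<rho> w)) * h, snd (\<rho> w))" using B_step2[of r "snd w"] wD wr by simp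
  also have "\<dots> = phi (\<sigma> (\<rho> w))" by (simp add: phi_def sC_snd)
  also have "\<sigma> (\<rho> w) = K x" unfolding knight_def w_def x hh by (simp add: funpow_swap1)
  finally show ?thesis .
qed

lemma B_hq: "x \<in> D \<Longrightarrow> (B ^^ (h * q)) (phi x) = phi ((K ^^ q) x)"
proof (induction q)
  case 0 then show ?case by simp
next
  case (Suc q)
  have "(B ^^ (h * Suc q)) (phi x) = (B ^^ h) ((B ^^ (h * q)) (phi x))"
    by (simp add: funpow_add)
  also have "\<dots> = phi (K ((K ^^ q) x))" using Suc B_h K_pow_in by simp
  finally show ?case by simp
qed

lemma B_res: "y \<in> E \<Longrightarrow> fst (B y) mod h = Suc (fst y) mod h"
proof -
  assume "y \<in> E"
  then obtain r s j where y: "y = (r * h + s, j)" and d: "(r, j) \<in> D" and sh: "s < h"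
    by (rule E_decomp)
  show ?thesis
  proof (cases "s + 1 < h")
    case True
    then show ?thesis using B_step1[OF d True] y by simp
  next
    case False
    then have ss: "s = h - 1" using sh by simp
    have "Suc (r * h + s) = (r + 1) * h" using ss hpos by simp
    then show ?thesis using B_step2[OF d] y ss by simp
  qed
qed

lemma B_pow_res: "y \<in> E \<Longrightarrow> fst ((B ^^ k) y) mod h = (fst y + k) mod h"
proof (induction k)
  case 0 then show ?case by simp
next
  case (Suc k)
  have "fst ((B ^^ Suc k) y) mod h = Suc (fst ((B ^^ k) y)) mod h"
    using B_res[OF B_pow_in[OF Suc.prems, of k]] by simp
  also have "\<dots> = Suc (fst ((B ^^ k) y) mod h) mod h" by (simp add: mod_Suc_eq)
  also have "\<dots> = (fst y + Suc k) mod h" using Suc by (simp add: mod_Suc_eq)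
  finally show ?case .
qed

lemma phi_in: "x \<in> D \<Longrightarrow> phi x \<in> E"
  using hpos by (cases x) (simp add: phi_def E_mem)

lemma phi_inj: "phi x = phi y \<Longrightarrow> x = y"
  using hpos by (cases x, cases y) (simp add: phi_def)

lemma fwd:
  assumes orbK: "\<forall>x\<in>D. {(K ^^ k) x | k. True} = D"
  shows "\<forall>x\<in>E. {(B ^^ k) x | k. True} = E"
proof (intro ballI equalityI subsetI)
  fix x y assume x: "x \<in> E"
  { assume "y \<in> {(B ^^ k) x | k. True}" then show "y \<in> E" using B_pow_in[OF x] by blast }
  assume y: "y \<in> E"
  obtain z c where zD: "z \<in> D" and zc: "(B ^^ c) x = phi z" using to_phi[OF x] by blast
  obtain w a where wD: "w \<in> D" and wa: "(B ^^ a) (phi w) = y" using from_phi[OF y] by blast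
  have "w \<in> {(K ^^ k) z | k. True}" using orbK zD wD by blast
  then obtain q where wq: "w = (K ^^ q) z" by blast
  have "(B ^^ (a + h * q + c)) x = (B ^^ a) ((B ^^ (h * q)) ((B ^^ c) x))"
    by (simp add: funpow_add)
  also have "\<dots> = y" using zc B_hq[OF zD, of q] wq wa by simp
  finally show "y \<in> {(B ^^ k) x | k. True}" by (metis (mono_tags, lifting) mem_Collect_eq)
qed

lemma bwd:
  assumes orbB: "\<forall>x\<in>E. {(B ^^ k) x | k. True} = E"
  shows "\<forall>x\<in>D. {(K ^^ k) x | k. True} = D"
proof (intro ballI equalityI subsetI)
  fix x y assume x: "x \<in> D"
  { assume "y \<in> {(K ^^ k) x | k. True}" then show "y \<in> D" using K_pow_in[OF x] by blast }
  assume y: "y \<in> D"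
  have "phi y \<in> {(B ^^ k) (phi x) | k. True}" using orbB phi_in[OF x] phi_in[OF y] by blast
  then obtain k where k: "(B ^^ k) (phi x) = phi y" by auto
  have "fst (phi y) mod h = (fst (phi x) + k) mod h" using B_pow_res[OF phi_in[OF x], of k] k by simp
  then have "k mod h = 0" by (simp add: phi_def)
  then have kq: "k = h * (k div h)" by (metis mult_div_mod_eq add_0_right)
  have "phi ((K ^^ (k div h)) x) = phi y" using B_hq[OF x, of "k div h"] k kq by simp
  then have "(K ^^ (k div h)) x = y" by (rule phi_inj)
  then show "y \<in> {(K ^^ k) x | k. True}" by blast
qed

end

lemma finD: "D \<subseteq> {..<(m::nat)} \<times> {..<(n::nat)} \<Longrightarrow> finite D"
  by (meson finite_SigmaI finite_lessThan finite_subset)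

theorem lemma4p1:
  fixes m n h :: nat and D :: "(nat \<times> nat) set"
  assumes "is_array m n D" and "0 < h"
  shows "is_solution D (knight m n D h) \<longleftrightarrow>
         is_solution (kron_col h D) (bishop (m * h) n (kron_col h D))"
proof -
  have Dsub: "D \<subseteq> {..<m} \<times> {..<n}" and mpos: "0 < m" and npos: "0 < n"
    using assms(1) by (auto simp: is_array_def)
  have fE: "finite (kron_col h D)" using finD[OF E_sub[OF Dsub mpos npos assms(2)]] .
  show ?thesis
    unfolding sol_iff[OF finD[OF Dsub]] sol_iff[OF fE]
    using fwd[OF Dsub mpos npos assms(2)] bwd[OF Dsub mpos npos assms(2)] by blast
qed

end
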